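(* Assume $\alpha=\beta=1$ and let $(U,V,\Lambda)$ be the similarity profile, with $\lambda^*:=\|\Lambda/U\|_{L^\infty}$. Then for every $\tau\ge0$ and all measurable $\rho,\zeta:\mathbb R\to(0,\infty)$ for which $\mathcal I_\Lambda(\rho,\zeta)$ is finite, setting $\mathbf u=(\rho U,\zeta V)$, $$\mathcal I_\Lambda(\rho,\zeta)-e^\tau\mathcal D_{\mathrm{react}}(\rho,\zeta)\le\mu_0e^{-\tau}\mathcal E_{\mathrm B}(\mathbf u|\mathbf U)+K_0e^{-\tau},$$ where $\mu_0=\frac{(\lambda^* )^2e^{\lambda^*/k}}{2k}$ and $K_0=\frac{e^{\lambda^*/k}}{k}\int_{\mathbb R}\frac{\alpha^2\Lambda^2}{U}\mathrm dy$.
   Context: Fix $d_1,d_2,k>0$, real stoichiometric coefficients $\alpha,\beta\ge1$ and $A_-,A_+>0$. The similarity profile is a triple $(U,V,\Lambda)$ with $U,V\in\mathrm C^2(\mathbb R)$ positive, bounded and bounded away from $0$, $\Lambda:\mathbb R\to\mathbb R$, satisfying $d_1U''+\tfrac y2U'+\alpha\Lambda=0$, $d_2V''+\tfrac y2V'-\beta\Lambda=0$, $U^\alpha=V^\beta$ on $\mathbb R$, and $U(\pm\infty)=A_\pm^\beta$, $V(\pm\infty)=A_\pm^\alpha$; $\mathbf U=(U,V)$. $\lambda_{\mathrm B}(z)=z\log z-z+1$; $\mathcal E_{\mathrm B}(\mathbf u|\mathbf U)=\int_{\mathbb R}\big(\lambda_{\mathrm B}(\rho)U+\lambda_{\mathrm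 B}(\zeta)V\big)\mathrm dy$ with $\rho=u/U$, $\zeta=v/V$. $\Gamma(a,b)=(a-b)(\log a-\log b)$ for $a,b>0$, $\Gamma(0,0)=0$, $\Gamma(0,c)=\Gamma(c,0)=\infty$ for $c>0$. Reactive dissipation $\mathcal D_{\mathrm{react}}(\rho,\zeta)=\int_{\mathbb R}kU^\alpha\,\Gamma(\rho^\alpha,\zeta^\beta)\,\mathrm dy$. Mixed term $\mathcal I_\Lambda(\rho,\zeta)=\int_{\mathbb R}\big((1-\rho)\alpha-(1-\zeta)\beta\big)\Lambda\,\mathrm dy$. $\|\cdot\|_{L^\infty}$ is the supremum of the absolute value. *)

theory Defs
  imports "HOL-Analysis.Analysis"
begin

definition C2_fun :: "(real \<Rightarrow> real) \<Rightarrow> bool" where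
  "C2_fun f \<longleftrightarrow> (\<forall>y. f differentiable at y) \<and> (\<forall>y. deriv f differentiable at y)
     \<and> continuous_on UNIV (deriv (deriv f))"

definition pos_bdd_away :: "(real \<Rightarrow> real) \<Rightarrow> bool" where
  "pos_bdd_away f \<longleftrightarrow> (\<exists>c>0. \<forall>y. c \<le> f y) \<and> (\<exists>C. \<forall>y. f y \<le> C)"

definition similarity_profile ::
  "real \<Rightarrow> real \<Rightarrow> real \<Rightarrow> real \<Rightarrow> real \<Rightarrow> real \<Rightarrow>
   (real \<Rightarrow> real) \<Rightarrow> (real \<Rightarrow> real) \<Rightarrow> (real \<Rightarrow> real) \<Rightarrow> bool" where
  "similarity_profile d1 d2 \<alpha> \<beta> Am Ap U V \<Lambda> \<longleftrightarrow>
     C2_fun U \<and> C2_fun V \<and> pos_bdd_away U \<and> pos_bdd_away V \<and>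
     (\<forall>y. d1 * deriv (deriv U) y + y / 2 * deriv U y + \<alpha> * \<Lambda> y = 0) \<and>
     (\<forall>y. d2 * deriv (deriv V) y + y / 2 * deriv V y - \<beta> * \<Lambda> y = 0) \<and>
     (\<forall>y. U y powr \<alpha> = V y powr \<beta>) \<and>
     (U \<longlongrightarrow> Am powr \<beta>) at_bot \<and> (U \<longlongrightarrow> Ap powr \<beta>) at_top \<and>
     (V \<longlongrightarrow> Am powr \<alpha>) at_bot \<and> (V \<longlongrightarrow> Ap powr \<alpha>) at_top"

definition lambdaB :: "real \<Rightarrow> real" where
  "lambdaB z = z * ln z - z + 1"

definition entropyB ::
  "(real \<Rightarrow> real) \<Rightarrow> (real \<Rightarrow> real) \<Rightarrow> (real \<Rightarrow> real) \<Rightarrow> (real \<Rightarrow> real) \<Rightarrow> ennreal" where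
  "entropyB u v U V = (\<integral>\<^sup>+ y. ennreal (lambdaB (u y / U y) * U y + lambdaB (v y / V y) * V y) \<partial>lebesgue)"

definition GammaF :: "real \<Rightarrow> real \<Rightarrow> ereal" where
  "GammaF a b = (if a > 0 \<and> b > 0 then ereal ((a - b) * (ln a - ln b))
                 else if a = 0 \<and> b = 0 then 0 else \<infinity>)"

definition D_react ::
  "real \<Rightarrow> real \<Rightarrow> real \<Rightarrow> (real \<Rightarrow> real) \<Rightarrow> (real \<Rightarrow> real) \<Rightarrow> (real \<Rightarrow> real) \<Rightarrow> ennreal" where
  "D_react k \<alpha> \<beta> U \<rho> \<zeta> =
     (\<integral>\<^sup>+ y. e2ennreal (ereal (k * U y powr \<alpha>) * GammaF (\<rho> y powr \<alpha>) (\<zeta> y powr \<beta>)) \<partial>lebesgue)"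

definition I_mixed_integrand ::
  "real \<Rightarrow> real \<Rightarrow> (real \<Rightarrow> real) \<Rightarrow> (real \<Rightarrow> real) \<Rightarrow> (real \<Rightarrow> real) \<Rightarrow> real \<Rightarrow> real" where
  "I_mixed_integrand \<alpha> \<beta> \<Lambda> \<rho> \<zeta> y = ((1 - \<rho> y) * \<alpha> - (1 - \<zeta> y) * \<beta>) * \<Lambda> y"

definition I_mixed ::
  "real \<Rightarrow> real \<Rightarrow> (real \<Rightarrow> real) \<Rightarrow> (real \<Rightarrow> real) \<Rightarrow> (real \<Rightarrow> real) \<Rightarrow> real" where
  "I_mixed \<alpha> \<beta> \<Lambda> \<rho> \<zeta> = (\<integral> y. I_mixed_integrand \<alpha> \<beta> \<Lambda> \<rho> \<zeta> y \<partial>lebesgue)"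

definition sup_norm :: "(real \<Rightarrow> real) \<Rightarrow> real" where
  "sup_norm f = (SUP y. \<bar>f y\<bar>)"

end

theory Submission
  imports Defs
begin


lemma ln_lb: "0 < x \<Longrightarrow> 1 - 1/x \<le> ln (x::real)"
proof -
  assume x: "0 < x"
  have "ln (1/x) \<le> 1/x - 1" using ln_le_minus_one[of "1/x"] x by simp
  thus ?thesis using x by (simp add: ln_div)
qed

lemma lambdaB_nonneg: "0 < x \<Longrightarrow> 0 \<le> lambdaB x"
proof -
  assume x: "0 < x"
  have "x * (1 - 1/x) \<le> x * ln x" using ln_lb[OF x] x by (intro mult_left_mono) auto
  moreover have "x * (1 - 1/x) = x - 1" using x by (simp add: field_simps)
  ultimately show ?thesis by (simp add: lambdaB_def)
qed

lemma lambdaB_quarter: "0 < m \<Longrightarrow> m / 4 \<le> lambdaB m / 2 + 1"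
proof -
  assume m: "0 < m"
  define c where "c = exp (1/2::real)"
  have c3: "c \<le> 3" unfolding c_def using exp_le_cancel_iff[of "1/2" "1::real"] exp_le by linarith
  have cp: "c > 0" unfolding c_def by simp
  have "ln (m / c) \<ge> 1 - c / m" using ln_lb[of "m/c"] m cp by simp
  moreover have "ln (m / c) = ln m - 1/2" using m cp by (simp add: ln_div c_def)
  ultimately have "ln m \<ge> 3/2 - c/m" by simp
  hence "m * ln m \<ge> m * (3/2 - c/m)" using m by (intro mult_left_mono) auto
  moreover have "m * (3/2 - c/m) = 3/2*m - c" using m by (simp add: field_simps)
  ultimately have "m * ln m \<ge> 3/2*m - c" by linarith
  hence "m / 4 \<le> (m * ln m - m + 1) / 2 + 1" using c3 by (simp add: field_simps)
  thus ?thesis unfolding lambdaB_def .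
qed

lemma gamma_lb:
  assumes r: "0 < r" and z: "0 < (z::real)"
  shows "(r - z)^2 / max r z \<le> (r - z) * (ln r - ln z)"
proof (cases "z \<le> r")
  case True
  have "ln (r/z) \<ge> 1 - z/r" using ln_lb[of "r/z"] r z by simp
  hence "ln r - ln z \<ge> (r - z)/r" using r z by (simp add: ln_div diff_divide_distrib)
  hence "(r - z) * (ln r - ln z) \<ge> (r - z) * ((r - z)/r)" using True by (intro mult_left_mono) auto
  thus ?thesis using True by (simp add: power2_eq_square max_def)
next
  case False
  have "ln (z/r) \<ge> 1 - r/z" using ln_lb[of "z/r"] r z by simp
  hence "ln z - ln r \<ge> (z - r)/z" using r z by (simp add: ln_div diff_divide_distrib)
  hence "(z - r) * (ln z - ln r) \<ge> (z - r) * ((z - r)/z)" using False by (intro mult_left_mono) auto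
  thus ?thesis using False by (simp add: power2_eq_square max_def algebra_simps)
qed

lemma amgm: fixes A X Y :: real assumes "A > 0" shows "X * Y \<le> A * X^2 + Y^2 / (4 * A)"
proof -
  have "0 \<le> A * (X - Y/(2*A))^2" using assms by simp
  also have "A * (X - Y/(2*A))^2 = A * X^2 + Y^2 / (4 * A) - X * Y"
    using assms by (simp add: power2_eq_square field_simps)
  finally show ?thesis by simp
qed

lemma pointwise:
  fixes u l r z L t k E :: real
  assumes u: "0 < u" and r: "0 < r" and z: "0 < z" and a: "\<bar>l\<bar> / u \<le> L"
    and t: "0 < t" and k: "0 < k" and E: "1 \<le> E"
  shows "(z - r) * l \<le> t * (k * u * ((r - z) * (ln r - ln z)))
          + (L^2 * E / (2*k) * inverse t) * ((lambdaB r + lambdaB z) * u)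
          + (E / k) * (l^2 / u) * inverse t"
proof -
  define m where "m = max r z"
  have m: "0 < m" using r z by (simp add: m_def)
  define a where "a = \<bar>l\<bar> / u"
  have a0: "0 \<le> a" using u by (simp add: a_def)
  have aL: "a^2 \<le> L^2" using a a0 unfolding a_def[symmetric] by (intro power_mono) auto
  have l2: "l^2 = a^2 * u^2" using u by (simp add: a_def power_divide)
  have lam: "lambdaB m \<le> lambdaB r + lambdaB z"
    using lambdaB_nonneg[OF r] lambdaB_nonneg[OF z] by (simp add: m_def max_def)
  have lm0: "0 \<le> lambdaB m" using lambdaB_nonneg[OF m] .
  have s1: "(z - r) * l \<le> \<bar>r - z\<bar> * \<bar>l\<bar>"
    by (metis abs_ge_self abs_minus_commute abs_mult)
  have pos: "t * k * u / m > 0" using t k u m by simp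
  have s2: "\<bar>r - z\<bar> * \<bar>l\<bar> \<le> (t*k*u/m) * \<bar>r - z\<bar>^2 + \<bar>l\<bar>^2 / (4 * (t*k*u/m))"
    by (rule amgm[OF pos])
  have s3: "(t*k*u/m) * \<bar>r - z\<bar>^2 \<le> t * (k * u * ((r - z) * (ln r - ln z)))"
  proof -
    have "(r - z)^2 / m \<le> (r - z) * (ln r - ln z)" using gamma_lb[OF r z] by (simp add: m_def)
    hence "(t*k*u) * ((r - z)^2 / m) \<le> (t*k*u) * ((r - z) * (ln r - ln z))"
      using t k u by (intro mult_left_mono) auto
    thus ?thesis by (simp add: field_simps)
  qed
  have s4: "\<bar>l\<bar>^2 / (4 * (t*k*u/m)) = a^2 * u * (m/4) / (t*k)"
    using u t k m l2 by (simp add: field_simps power2_eq_square)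
  have q: "m/4 \<le> lambdaB m / 2 + 1" by (rule lambdaB_quarter[OF m])
  have s5: "a^2 * u * (m/4) / (t*k) \<le> a^2 * u * (lambdaB m / 2 + 1) / (t*k)"
    using q t k u a0 by (intro divide_right_mono mult_left_mono) auto
  have s6: "a^2 * u * (lambdaB m / 2 + 1) / (t*k) \<le>
      (L^2 * E / (2*k) * inverse t) * ((lambdaB r + lambdaB z) * u) + (E / k) * (l^2 / u) * inverse t"
  proof -
    have e1: "a^2 * (lambdaB m / 2) \<le> L^2 * E * ((lambdaB r + lambdaB z)/2)"
    proof -
      have "a^2 * (lambdaB m / 2) \<le> L^2 * (lambdaB m / 2)" using aL lm0 by (intro mult_right_mono) auto
      also have "\<dots> \<le> L^2 * ((lambdaB r + lambdaB z)/2)" using lam by (intro mult_left_mono) auto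
      also have "\<dots> \<le> L^2 * E * ((lambdaB r + lambdaB z)/2)"
        using E lam lm0 by (simp add: mult_le_cancel_left1 mult_right_mono)
      finally show ?thesis .
    qed
    have e2: "a^2 \<le> E * a^2" using E a0 by (simp add: mult_le_cancel_right1)
    have "a^2 * (lambdaB m / 2 + 1) \<le> L^2 * E * ((lambdaB r + lambdaB z)/2) + E * a^2"
    proof -
      have x1: "a^2 * (lambdaB m / 2 + 1) = a^2 * (lambdaB m / 2) + a^2" by (simp add: algebra_simps)
      show ?thesis unfolding x1 using e1 e2 by linarith
    qed
    hence "a^2 * (lambdaB m / 2 + 1) * (u / (t*k)) \<le> (L^2 * E * ((lambdaB r + lambdaB z)/2) + E * a^2) * (u/(t*k))"
      using u t k by (intro mult_right_mono) auto
    thus ?thesis using u t k l2 by (simp add: field_simps power2_eq_square)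
  qed
  show ?thesis using s1 s2 s3 s4 s5 s6 by (simp add: power2_abs)
qed


lemma abs_le_exp: fixes y s :: real shows "0 < s \<Longrightarrow> \<bar>y\<bar> \<le> (s + 1) * exp (y^2 / (2 * s))"
proof -
  assume s: "0 < s"
  have a: "2 * \<bar>y\<bar> \<le> s + y^2 / s"
  proof -
    have "0 \<le> (\<bar>y\<bar> - s)^2 / s" using s by simp
    also have "(\<bar>y\<bar> - s)^2 / s = y^2/s - 2*\<bar>y\<bar> + s" using s
      by (simp add: power2_eq_square field_simps)
    finally show ?thesis by simp
  qed
  have b: "1 + y^2/(2 * s) \<le> exp (y^2/(2 * s))" by (rule exp_ge_add_one_self)
  have "\<bar>y\<bar> \<le> (s + 1) * (1 + y^2/(2 * s))"
  proof -
    have "(s + 1) * (1 + y^2/(2 * s)) = s + 1 + y^2/(2 * s) + y^2/2" using s by (simp add: field_simps)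
    moreover have "0 \<le> y^2/2" by simp
    moreover have "y^2/(2 * s) = (y^2/s)/2" by simp
    ultimately show ?thesis using a s by linarith
  qed
  also have "\<dots> \<le> (s + 1) * exp (y^2/(2 * s))" using b s by (intro mult_left_mono) auto
  finally show ?thesis .
qed

lemma profile_facts:
  assumes d1: "d1 > 0" and d2: "d2 > 0"
    and prof: "similarity_profile d1 d2 1 1 Am Ap U V \<Lambda>"
  shows "V = U" "\<exists>c>0. \<forall>y. c \<le> U y" "\<exists>M. \<forall>y. \<bar>\<Lambda> y / U y\<bar> \<le> M"
    "continuous_on UNIV U" "continuous_on UNIV \<Lambda>"
proof -
  have C2: "C2_fun U" and pU: "pos_bdd_away U" and pV: "pos_bdd_away V"
    and e1: "\<And>y. d1 * deriv (deriv U) y + y / 2 * deriv U y + 1 * \<Lambda> y = 0"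
    and e2: "\<And>y. d2 * deriv (deriv V) y + y / 2 * deriv V y - 1 * \<Lambda> y = 0"
    and eq: "\<And>y. U y powr 1 = V y powr 1"
    using prof unfolding similarity_profile_def by auto
  obtain c where c: "c > 0" "\<And>y. c \<le> U y" using pU unfolding pos_bdd_away_def by auto
  obtain c' where c': "c' > 0" "\<And>y. c' \<le> V y" using pV unfolding pos_bdd_away_def by auto
  show VU: "V = U"
  proof
    fix y show "V y = U y" using eq[of y] c(1) c(2)[of y] c'(1) c'(2)[of y] by simp
  qed
  show "\<exists>c>0. \<forall>y. c \<le> U y" using c by auto
  have dU: "\<And>y. (U has_real_derivative deriv U y) (at y)"
    using C2 unfolding C2_fun_def by (simp add: DERIV_deriv_iff_real_differentiable)
  have ddU: "\<And>y. (deriv U has_real_derivative deriv (deriv U) y) (at y)"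
    using C2 unfolding C2_fun_def by (simp add: DERIV_deriv_iff_real_differentiable)
  show "continuous_on UNIV U" using dU
    by (meson DERIV_continuous continuous_at_imp_continuous_on)
  have Lam: "\<And>y. \<Lambda> y = (d2 - d1)/2 * deriv (deriv U) y"
  proof -
    fix y show "\<Lambda> y = (d2 - d1)/2 * deriv (deriv U) y"
      using e1[of y] e2[of y] unfolding VU by (simp add: algebra_simps) 
  qed
  have LamF: "\<Lambda> = (\<lambda>y. (d2 - d1)/2 * deriv (deriv U) y)" using Lam by auto
  show "continuous_on UNIV \<Lambda>" unfolding LamF
    using C2 unfolding C2_fun_def by (intro continuous_intros) auto
  define s where "s = d1 + d2"
  have s: "s > 0" using d1 d2 by (simp add: s_def)
  have ode: "\<And>y. s * deriv (deriv U) y + y * deriv U y = 0"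
  proof -
    fix y show "s * deriv (deriv U) y + y * deriv U y = 0"
      using e1[of y] e2[of y] unfolding VU s_def by (simp add: algebra_simps)
  qed
  define W where "W y = deriv U y * exp (y^2 / (2 * s))" for y
  have dW: "\<And>y. (W has_real_derivative 0) (at y)"
  proof -
    fix y
    have "(W has_real_derivative deriv (deriv U) y * exp (y^2 / (2 * s))
            + deriv U y * (exp (y^2 / (2 * s)) * (2 * y / (2 * s)))) (at y)"
      unfolding W_def using s
      by (auto intro!: derivative_eq_intros ddU simp: power2_eq_square)
    moreover have "deriv (deriv U) y * exp (y^2 / (2 * s))
            + deriv U y * (exp (y^2 / (2 * s)) * (2 * y / (2 * s))) = 0"
    proof -
      have "deriv (deriv U) y * exp (y^2 / (2 * s))
            + deriv U y * (exp (y^2 / (2 * s)) * (2 * y / (2 * s))) = exp (y^2 / (2 * s)) / s * (s * deriv (deriv U) y + y * deriv U y)"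
        using s by (simp add: field_simps)
      thus ?thesis using ode[of y] by simp
    qed
    ultimately show "(W has_real_derivative 0) (at y)" by simp
  qed
  define C where "C = W 0"
  have WC: "\<And>y. W y = C" unfolding C_def using dW DERIV_isconst_all by blast
  have dd: "\<And>y. \<bar>deriv (deriv U) y\<bar> \<le> \<bar>C\<bar> * (s + 1) / s"
  proof -
    fix y
    have ex: "exp (y^2/(2 * s)) > 0" by simp
    have "deriv U y = C / exp (y^2/(2 * s))" using WC[of y] ex unfolding W_def by (simp add: field_simps)
    moreover have "deriv (deriv U) y = - y * deriv U y / s" using ode[of y] s by (simp add: field_simps)
    ultimately have "deriv (deriv U) y = - y * C / exp (y^2/(2 * s)) / s" by simp
    hence "\<bar>deriv (deriv U) y\<bar> = \<bar>y\<bar> * \<bar>C\<bar> / exp (y^2/(2 * s)) / s" using s ex by (simp add: abs_mult)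
    also have "\<dots> \<le> (s + 1) * exp (y^2/(2 * s)) * \<bar>C\<bar> / exp (y^2/(2 * s)) / s"
      using abs_le_exp[OF s, of y] s ex by (intro divide_right_mono mult_right_mono) auto
    also have "\<dots> = \<bar>C\<bar> * (s + 1) / s" using ex by simp
    finally show "\<bar>deriv (deriv U) y\<bar> \<le> \<bar>C\<bar> * (s + 1) / s" .
  qed
  show "\<exists>M. \<forall>y. \<bar>\<Lambda> y / U y\<bar> \<le> M"
  proof (intro exI allI)
    fix y
    have Uy: "U y > 0" using c(1) c(2)[of y] by linarith
    have "\<bar>\<Lambda> y\<bar> \<le> \<bar>d2 - d1\<bar>/2 * (\<bar>C\<bar> * (s + 1) / s)"
    proof -
      have "\<bar>d2 - d1\<bar> * \<bar>deriv (deriv U) y\<bar> \<le> \<bar>d2 - d1\<bar> * (\<bar>C\<bar> * (s + 1) / s)"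
        using dd[of y] by (intro mult_left_mono) auto
      thus ?thesis unfolding Lam by (simp add: abs_mult)
    qed
    moreover have "\<bar>\<Lambda> y / U y\<bar> = \<bar>\<Lambda> y\<bar> / U y" using Uy by simp
    moreover have "\<bar>\<Lambda> y\<bar> / U y \<le> \<bar>\<Lambda> y\<bar> / c" using Uy c by (intro divide_left_mono) auto
    ultimately show "\<bar>\<Lambda> y / U y\<bar> \<le> \<bar>d2 - d1\<bar>/2 * (\<bar>C\<bar> * (s + 1) / s) / c"
      using c(1) by (smt (verit, best) divide_right_mono)
  qed
qed


lemma ereal_fin:
  fixes D R :: ereal
  assumes "ereal x \<le> ereal t * D + R" "0 \<le> D" "0 \<le> R" "0 < t"
  shows "ereal x - ereal t * D \<le> R"
  using assms by (cases D; cases R) (auto simp: ereal_minus_le_iff)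

theorem mainTheorem11:
  fixes d1 d2 k Am Ap \<tau> :: real and U V \<Lambda> \<rho> \<zeta> :: "real \<Rightarrow> real"
  assumes "d1 > 0" "d2 > 0" "k > 0" "Am > 0" "Ap > 0"
    and prof: "similarity_profile d1 d2 1 1 Am Ap U V \<Lambda>"
    and "\<tau> \<ge> 0"
    and "\<rho> \<in> borel_measurable lebesgue" "\<zeta> \<in> borel_measurable lebesgue"
    and "\<forall>y. \<rho> y > 0" "\<forall>y. \<zeta> y > 0"
    and "integrable lebesgue (I_mixed_integrand 1 1 \<Lambda> \<rho> \<zeta>)"
  shows "let lamS = sup_norm (\<lambda>y. \<Lambda> y / U y);
             \<mu>0 = lamS\<^sup>2 * exp (lamS / k) / (2 * k);
             K0 = ereal (exp (lamS / k) / k) *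
                  enn2ereal (\<integral>\<^sup>+ y. ennreal ((1::real)\<^sup>2 * (\<Lambda> y)\<^sup>2 / U y) \<partial>lebesgue)
         in ereal (I_mixed 1 1 \<Lambda> \<rho> \<zeta>) - ereal (exp \<tau>) * enn2ereal (D_react k 1 1 U \<rho> \<zeta>)
            \<le> ereal (\<mu>0 * exp (- \<tau>)) *
                enn2ereal (entropyB (\<lambda>y. \<rho> y * U y) (\<lambda>y. \<zeta> y * V y) U V)
              + K0 * ereal (exp (- \<tau>))"
proof -
  note d1 = assms(1) and d2 = assms(2) and k = assms(3)
  note rm[measurable] = assms(8) and zm[measurable] = assms(9)
  have rp: "\<And>y. \<rho> y > 0" and zp: "\<And>y. \<zeta> y > 0" using assms(10,11) by auto
  note intI = assms(12)
  have VU: "V = U" and contU: "continuous_on UNIV U" and contL: "continuous_on UNIV \<Lambda>"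
    using profile_facts[OF d1 d2 prof] by auto
  obtain c where c: "c > 0" "\<And>y. c \<le> U y" using profile_facts(2)[OF d1 d2 prof] by auto
  have Up: "\<And>y. U y > 0" using c by (metis less_le_trans)
  obtain M where M: "\<And>y. \<bar>\<Lambda> y / U y\<bar> \<le> M" using profile_facts(3)[OF d1 d2 prof] by auto
  have Um[measurable]: "U \<in> borel_measurable lebesgue"
    using measurable_completion[of U lborel borel] borel_measurable_continuous_onI[OF contU]
    by (simp add: measurable_lborel1)
  have Lm[measurable]: "\<Lambda> \<in> borel_measurable lebesgue"
    using measurable_completion[of \<Lambda> lborel borel] borel_measurable_continuous_onI[OF contL]
    by (simp add: measurable_lborel1)
  define L where "L = sup_norm (\<lambda>y. \<Lambda> y / U y)"
  have bdd: "bdd_above (range (\<lambda>y. \<bar>\<Lambda> y / U y\<bar>))" by (rule bdd_aboveI2[where M=M]) (rule M)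
  have aL: "\<And>y. \<bar>\<Lambda> y\<bar> / U y \<le> L"
  proof -
    fix y
    have "\<bar>\<Lambda> y / U y\<bar> \<le> L" unfolding L_def sup_norm_def by (rule cSUP_upper[OF _ bdd]) auto
    thus "\<bar>\<Lambda> y\<bar> / U y \<le> L" using Up[of y] by simp
  qed
  have L0: "0 \<le> L" using aL[of 0] Up[of 0] by (metis abs_ge_zero divide_nonneg_pos order_trans)
  define t where "t = exp \<tau>"
  have t: "0 < t" by (simp add: t_def)
  define E where "E = exp (L / k)"
  have E: "1 \<le> E" unfolding E_def using L0 k by simp
  define e where "e = exp (- \<tau>)"
  have et: "e = inverse t" by (simp add: e_def t_def exp_minus)
  have e0: "0 \<le> e" by (simp add: e_def)
  define \<mu> where "\<mu> = L\<^sup>2 * E / (2 * k) * e"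
  have \<mu>0: "0 \<le> \<mu>" using k E e0 by (simp add: \<mu>_def)
  define fI where "fI = I_mixed_integrand 1 1 \<Lambda> \<rho> \<zeta>"
  define g where "g y = k * U y * ((\<rho> y - \<zeta> y) * (ln (\<rho> y) - ln (\<zeta> y)))" for y
  define h where "h y = (lambdaB (\<rho> y) + lambdaB (\<zeta> y)) * U y" for y
  define q where "q y = (1::real)\<^sup>2 * (\<Lambda> y)\<^sup>2 / U y" for y
  have g0: "0 \<le> g y" for y
  proof -
    have "0 \<le> (\<rho> y - \<zeta> y) * (ln (\<rho> y) - ln (\<zeta> y))"
      using gamma_lb[OF rp zp, of y y] rp[of y] zp[of y] by (smt (verit) divide_nonneg_pos zero_le_power2)
    thus ?thesis unfolding g_def using k Up[of y] by simp
  qed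
  have h0: "0 \<le> h y" for y unfolding h_def using lambdaB_nonneg[OF rp] lambdaB_nonneg[OF zp] Up[of y] by simp
  have q0: "0 \<le> q y" for y unfolding q_def using Up[of y] by simp
  have pw: "fI y \<le> t * g y + \<mu> * h y + (E / k) * q y * e" for y
    using pointwise[of "U y" "\<rho> y" "\<zeta> y" "\<Lambda> y" L t k E, OF Up rp zp aL t k E]
    unfolding fI_def I_mixed_integrand_def g_def h_def q_def \<mu>_def et by simp
  have gm[measurable]: "g \<in> borel_measurable lebesgue" unfolding g_def by measurable
  have hm[measurable]: "h \<in> borel_measurable lebesgue" unfolding h_def lambdaB_def by measurable
  have qm[measurable]: "q \<in> borel_measurable lebesgue" unfolding q_def by measurable
  define A where "A = (\<integral>\<^sup>+ y. ennreal (max 0 (fI y)) \<partial>lebesgue)"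
  define Dr where "Dr = D_react k 1 1 U \<rho> \<zeta>"
  define Ent where "Ent = entropyB (\<lambda>y. \<rho> y * U y) (\<lambda>y. \<zeta> y * V y) U V"
  define Q where "Q = (\<integral>\<^sup>+ y. ennreal ((1::real)\<^sup>2 * (\<Lambda> y)\<^sup>2 / U y) \<partial>lebesgue)"
  have Dr: "Dr = (\<integral>\<^sup>+ y. ennreal (g y) \<partial>lebesgue)"
    unfolding Dr_def D_react_def
  proof (intro nn_integral_cong)
    fix y
    show "e2ennreal (ereal (k * U y powr 1) * GammaF (\<rho> y powr 1) (\<zeta> y powr 1)) = ennreal (g y)"
      using Up[of y] rp[of y] zp[of y] by (simp add: GammaF_def g_def)
  qed
  have Ent: "Ent = (\<integral>\<^sup>+ y. ennreal (h y) \<partial>lebesgue)"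
    unfolding Ent_def entropyB_def VU h_def using Up by (intro nn_integral_cong) (simp add: algebra_simps)
  have Q: "Q = (\<integral>\<^sup>+ y. ennreal (q y) \<partial>lebesgue)" unfolding Q_def q_def ..
  have ennineq: "A \<le> ennreal t * Dr + (ennreal \<mu> * Ent + ennreal (E / k) * Q * ennreal e)"
  proof -
    have "A \<le> (\<integral>\<^sup>+ y. ennreal t * ennreal (g y) + (ennreal \<mu> * ennreal (h y) + (ennreal (E / k) * ennreal e) * ennreal (q y)) \<partial>lebesgue)"
      unfolding A_def
    proof (intro nn_integral_mono)
      fix y
      have "ennreal (max 0 (fI y)) \<le> ennreal (t * g y + (\<mu> * h y + ((E / k) * e) * q y))"
        using pw[of y] g0[of y] h0[of y] q0[of y] t \<mu>0 E k e0
        by (intro ennreal_leI) (auto simp: algebra_simps)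
      also have "\<dots> = ennreal t * ennreal (g y) + (ennreal \<mu> * ennreal (h y) + (ennreal (E / k) * ennreal e) * ennreal (q y))"
      proof -
        have p1: "0 \<le> t * g y" "0 \<le> \<mu> * h y" "0 \<le> (E / k * e) * q y" "0 \<le> E / k * e" "0 \<le> E / k"
          using g0[of y] h0[of y] q0[of y] t \<mu>0 E k e0 by auto
        show ?thesis
          apply (subst ennreal_plus[OF p1(1) add_nonneg_nonneg[OF p1(2,3)]])
          apply (subst ennreal_plus[OF p1(2,3)])
          apply (subst ennreal_mult[OF less_imp_le[OF t] g0])
          apply (subst ennreal_mult[OF \<mu>0 h0])
          apply (subst ennreal_mult[OF p1(4) q0])
          apply (subst ennreal_mult[OF p1(5) e0])
          by simp
      qed
      finally show "ennreal (max 0 (fI y)) \<le> \<dots>" .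
    qed
    also have "\<dots> = ennreal t * Dr + (ennreal \<mu> * Ent + (ennreal (E / k) * ennreal e) * Q)"
      unfolding Dr Ent Q
      by (simp add: nn_integral_add nn_integral_cmult)
    also have "\<dots> = ennreal t * Dr + (ennreal \<mu> * Ent + ennreal (E / k) * Q * ennreal e)"
      by (simp add: ac_simps)
    finally show ?thesis .
  qed
  have IA: "ereal (I_mixed 1 1 \<Lambda> \<rho> \<zeta>) \<le> enn2ereal A"
  proof -
    have im: "integrable lebesgue (\<lambda>y. max 0 (fI y))" using intI unfolding fI_def by auto
    have "A = ennreal (\<integral>y. max 0 (fI y) \<partial>lebesgue)"
      unfolding A_def by (rule nn_integral_eq_integral[OF im]) auto
    moreover have "I_mixed 1 1 \<Lambda> \<rho> \<zeta> \<le> (\<integral>y. max 0 (fI y) \<partial>lebesgue)"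
      unfolding I_mixed_def fI_def[symmetric] using intI im unfolding fI_def
      by (intro integral_mono) auto
    moreover have "0 \<le> (\<integral>y. max 0 (fI y) \<partial>lebesgue)" by (intro integral_nonneg_AE) auto
    ultimately show ?thesis by simp
  qed
  have fin: "ereal (I_mixed 1 1 \<Lambda> \<rho> \<zeta>) \<le> ereal t * enn2ereal Dr + enn2ereal (ennreal \<mu> * Ent + ennreal (E / k) * Q * ennreal e)"
  proof -
    have "enn2ereal A \<le> enn2ereal (ennreal t * Dr + (ennreal \<mu> * Ent + ennreal (E / k) * Q * ennreal e))"
      using ennineq by (simp add: less_eq_ennreal.rep_eq)
    also have "\<dots> = ereal t * enn2ereal Dr + enn2ereal (ennreal \<mu> * Ent + ennreal (E / k) * Q * ennreal e)"
      using t by (simp add: plus_ennreal.rep_eq times_ennreal.rep_eq)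
    finally show ?thesis using IA by simp
  qed
  have rhs: "enn2ereal (ennreal \<mu> * Ent + ennreal (E / k) * Q * ennreal e)
     = ereal (L\<^sup>2 * exp (L / k) / (2 * k) * exp (- \<tau>)) * enn2ereal Ent
       + ereal (exp (L / k) / k) * enn2ereal Q * ereal (exp (- \<tau>))"
    using \<mu>0 E k e0 by (simp add: plus_ennreal.rep_eq times_ennreal.rep_eq \<mu>_def E_def e_def)
  show ?thesis
    unfolding Let_def L_def[symmetric] Dr_def[symmetric] Ent_def[symmetric] Q_def[symmetric]
      t_def[symmetric] rhs[symmetric]
    by (rule ereal_fin[OF fin]) (auto simp: t)
qed
end
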